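(* Let $A\in\mathbb{R}^{n\times n}$ be symmetric with spectrum contained in $[0,1]$, let $\bm{v}\in\mathbb{R}^n$ with $\|\bm{v}\|=1$, let $m\ge2$ and suppose $m$ Lanczos steps for $A$ and $\bm{v}$ give $V_m,\bm{v}_{m+1},H_m,h_{m+1,m}$. Let $\bm{y}_m(t)=V_m\big(\sin(t\sqrt{H_m})\,(\sqrt{H_m})^{-1}\big)\bm{e}_1$ (i.e. $V_m\,t\sigma(t^2H_m)\bm{e}_1$) and $\bm{r}_m(t)=-A\bm{y}_m(t)-\bm{y}_m''(t)$. Then for $0\le t\le1$, $$\|\bm{r}_m(t)\|\le16\,\frac{(t/2)^{2m-1}}{(2m-1)!}.$$
   Context: Lanczos: $V_m$ has orthonormal columns with first column $\bm{v}$, $\bm{v}_{m+1}$ is a unit vector orthogonal to them, $H_m=V_m^TAV_m$ is symmetric tridiagonal, $h_{m+1,m}\ge0$, and $AV_m=V_mH_m+h_{m+1,m}\bm{v}_{m+1}\bm{e}_m^T$. $\sigma$ is the entire function with $\sigma(x^2)=\sin x/x$, $\sigma(0)=1$. Norms are Euclidean. *)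

theory Defs
  imports "HOL-Analysis.Analysis"
begin

definition mpow :: "real^'m^'m \<Rightarrow> nat \<Rightarrow> real^'m^'m" where
  "mpow H k = (((**) H) ^^ k) (mat 1)"

definition is_eigenvalue :: "real^'n^'n \<Rightarrow> real \<Rightarrow> bool" where
  "is_eigenvalue A l \<longleftrightarrow> (\<exists>x. x \<noteq> 0 \<and> A *v x = l *\<^sub>R x)"

text \<open>The matrix function sigma(X) for the entire function sigma with
  sigma(x^2) = sin x / x, i.e. sigma(z) = sum_k (-1)^k z^k / (2k+1)!,
  evaluated by its (everywhere convergent) power series.\<close>
definition mat_sigma :: "real^'m^'m \<Rightarrow> real^'m^'m" where
  "mat_sigma X = (\<Sum>k. ((-1)^k / fact (2*k+1)) *\<^sub>R mpow X k)"

definition first_idx :: "'m::{finite,linorder}" where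
  "first_idx = Min UNIV"
definition last_idx :: "'m::{finite,linorder}" where
  "last_idx = Max UNIV"

definition tridiagonal :: "real^('m::{finite,linorder})^('m::{finite,linorder}) \<Rightarrow> bool" where
  "tridiagonal H \<longleftrightarrow> (\<forall>i j. (\<exists>k. i < k \<and> k < j) \<longrightarrow> H$i$j = 0 \<and> H$j$i = 0)"

text \<open>Outer product u e_m^T (n x m matrix).\<close>
definition outer_last :: "real^'n \<Rightarrow> real^('m::{finite,linorder})^('n::finite)" where
  "outer_last u = (\<chi> i j. if j = last_idx then u$i else 0)"

end

theory Submission
  imports Defs "HOL-Computational_Algebra.Polynomial"
begin



lemma sym_dot:
  fixes M :: "real^'k^'k"
  assumes "transpose M = M"
  shows "(M *v x) \<bullet> y = x \<bullet> (M *v y)"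
proof -
  have "M *v x = x v* M" by (metis assms vector_transpose_matrix)
  then show ?thesis by (simp add: dot_lmul_matrix)
qed

lemma quad_zero:
  fixes a c :: real
  assumes "\<And>e. 2*e*a + e^2*c \<le> 0"
  shows "a = 0"
proof -
  define e where "e = a / (c^2+1)"
  have p: "c^2+1 > 0" using zero_le_power2[of c] by linarith
  have "2*e*a + e^2*c \<le> 0" by (rule assms)
  hence "(2*e*a + e^2*c) * (c^2+1)^2 \<le> 0"
    by (simp add: mult_nonpos_nonneg)
  moreover have "(2*e*a + e^2*c) * (c^2+1)^2 = a^2 * (2*c^2+2+c)"
  proof -
    define d where "d = c^2+1"
    have s0: "d \<noteq> 0" using p unfolding d_def by simp
    have "(2*e*a + e^2*c) * (d^2) = (2*(a^2)*d) + ((a^2)*c)"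
      using s0 unfolding e_def d_def[symmetric] by (simp add: field_simps power2_eq_square)
    thus ?thesis unfolding d_def by (simp add: algebra_simps)
  qed
  ultimately have "a^2 * (2*c^2+2+c) \<le> 0" by simp
  moreover have "2*c^2+2+c > 0"
  proof -
    have "0 \<le> (c + 1/4)^2" by simp
    thus ?thesis by (simp add: power2_eq_square algebra_simps)
  qed
  ultimately have "a^2 \<le> 0" by (simp add: mult_le_0_iff)
  thus ?thesis by simp
qed

lemma spectral_aux:
  fixes M :: "real^'k^'k"
  assumes sym: "transpose M = M"
  shows "subspace S \<Longrightarrow> (\<forall>x\<in>S. M *v x \<in> S) \<Longrightarrow>
    \<exists>B. B \<subseteq> S \<and> pairwise orthogonal B \<and>
        (\<forall>b\<in>B. norm b = 1 \<and> M *v b = (b \<bullet> (M *v b)) *\<^sub>R b) \<and> S \<subseteq> span B"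
proof (induction "dim S" arbitrary: S rule: less_induct)
  case less
  show ?case
  proof (cases "S \<subseteq> {0}")
    case True
    then show ?thesis by (intro exI[of _ "{}"]) auto
  next
    case False
    then obtain z where z: "z \<in> S" "z \<noteq> 0" by auto
    define q where "q = (\<lambda>x. x \<bullet> (M *v x))"
    define K where "K = sphere 0 1 \<inter> S"
    have "compact K" unfolding K_def
      using compact_Int_closed[OF compact_sphere closed_subspace[OF less.prems(1)]] by simp
    moreover have "K \<noteq> {}"
    proof -
      have "(1/norm z) *\<^sub>R z \<in> K" unfolding K_def using z less.prems(1)
        by (simp add: subspace_scale)
      thus ?thesis by auto
    qed
    moreover have "continuous_on K q"
    proof -
      have "bounded_linear ((*v) M)"
        using matrix_vector_mul_linear linear_conv_bounded_linear by blast
      hence "continuous_on K ((*v) M)" by (rule linear_continuous_on)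
      thus ?thesis unfolding q_def by (intro continuous_intros)
    qed
    ultimately obtain x where xK: "x \<in> K" and xmax: "\<And>u. u \<in> K \<Longrightarrow> q u \<le> q x"
      using continuous_attains_sup by metis
    have xS: "x \<in> S" and nx: "norm x = 1" using xK unfolding K_def by auto
    have xx: "x \<bullet> x = 1" using nx by (simp add: norm_eq_1)
    have crit: "y \<bullet> (M *v x) = 0" if yS: "y \<in> S" and yo: "x \<bullet> y = 0" for y
    proof (rule quad_zero)
      fix e :: real
      have ineq: "q (x + e *\<^sub>R y) \<le> q x * (norm (x + e *\<^sub>R y))^2"
      proof (cases "x + e *\<^sub>R y = 0")
        case True
        then show ?thesis by (simp add: q_def)
      next
        case False
        define u where "u = (1/norm (x + e *\<^sub>R y)) *\<^sub>R (x + e *\<^sub>R y)"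
        have "x + e *\<^sub>R y \<in> S" using xS yS less.prems(1)
          by (simp add: subspace_add subspace_scale)
        hence "u \<in> S" unfolding u_def using less.prems(1) by (simp add: subspace_scale)
        moreover have "norm u = 1" unfolding u_def using False by simp
        ultimately have "u \<in> K" unfolding K_def by simp
        hence "q u \<le> q x" by (rule xmax)
        moreover have "q u = q (x + e *\<^sub>R y) / (norm (x + e *\<^sub>R y))^2"
          unfolding u_def q_def by (simp add: matrix_vector_mult_scaleR power2_eq_square)
        ultimately show ?thesis using False
          by (simp add: divide_le_eq)
      qed
      have e1: "q (x + e *\<^sub>R y) = q x + 2*e*(y \<bullet> (M *v x)) + e^2 * q y"
      proof -
        have "x \<bullet> (M *v y) = y \<bullet> (M *v x)"
          using sym_dot[OF sym, of x y] by (simp add: inner_commute)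
        thus ?thesis unfolding q_def
          by (simp add: matrix_vector_right_distrib matrix_vector_mult_scaleR
              inner_add_left inner_add_right algebra_simps power2_eq_square)
      qed
      have e2: "(norm (x + e *\<^sub>R y))^2 = 1 + e^2 * (y \<bullet> y)"
      proof -
        have "(norm (x + e *\<^sub>R y))^2 = (x + e *\<^sub>R y) \<bullet> (x + e *\<^sub>R y)"
          by (rule power2_norm_eq_inner)
        also have "\<dots> = 1 + e^2 * (y \<bullet> y)" using xx yo
          by (simp add: inner_add_left inner_add_right inner_commute power2_eq_square)
        finally show ?thesis .
      qed
      show "2*e*(y \<bullet> (M *v x)) + e^2 * (q y - q x * (y \<bullet> y)) \<le> 0"
        using ineq unfolding e1 e2 by (simp add: algebra_simps)
    qed
    define \<mu> where "\<mu> = x \<bullet> (M *v x)"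
    define d where "d = M *v x - \<mu> *\<^sub>R x"
    have MxS: "M *v x \<in> S" using less.prems(2) xS by blast
    have dS: "d \<in> S" unfolding d_def using MxS xS less.prems(1)
      by (simp add: subspace_diff subspace_scale)
    have xd: "x \<bullet> d = 0" unfolding d_def \<mu>_def using xx by (simp add: inner_diff_right)
    have "d \<bullet> (M *v x) = 0" using crit[OF dS xd] .
    hence "d \<bullet> d = 0" using xd unfolding d_def
      by (simp add: inner_diff_left inner_diff_right inner_commute)
    hence eig: "M *v x = \<mu> *\<^sub>R x" unfolding d_def by simp
    define S' where "S' = S \<inter> {y. x \<bullet> y = 0}"
    have sub': "subspace S'" unfolding S'_def
      by (rule subspace_inter[OF less.prems(1) subspace_hyperplane])
    have inv': "\<forall>y\<in>S'. M *v y \<in> S'"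
    proof
      fix y assume "y \<in> S'"
      hence yS: "y \<in> S" and "x \<bullet> y = 0" unfolding S'_def by auto
      moreover have "x \<bullet> (M *v y) = (M *v x) \<bullet> y" using sym_dot[OF sym] by simp
      ultimately show "M *v y \<in> S'" unfolding S'_def using less.prems(2) eig by simp
    qed
    have "dim S' < dim S"
    proof (rule dim_psubset)
      have "S' \<subseteq> S" unfolding S'_def by auto
      moreover have "x \<in> S" "x \<notin> S'" using xS xx unfolding S'_def by auto
      ultimately show "span S' \<subset> span S"
        using span_eq_iff less.prems(1) sub' by (metis psubsetI)
    qed
    from less.hyps[OF this sub' inv'] obtain B' where
      B': "B' \<subseteq> S'" "pairwise orthogonal B'"
          "\<forall>b\<in>B'. norm b = 1 \<and> M *v b = (b \<bullet> (M *v b)) *\<^sub>R b" "S' \<subseteq> span B'" by blast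
    show ?thesis
    proof (intro exI[of _ "insert x B'"] conjI)
      show "insert x B' \<subseteq> S" using B'(1) xS unfolding S'_def by auto
      show "pairwise orthogonal (insert x B')"
        using B'(1,2) xx unfolding pairwise_insert S'_def
        by (auto simp: orthogonal_def inner_commute)
      show "\<forall>b\<in>insert x B'. norm b = 1 \<and> M *v b = (b \<bullet> (M *v b)) *\<^sub>R b"
        using B'(3) nx eig xx by (simp add: \<mu>_def)
      show "S \<subseteq> span (insert x B')"
      proof
        fix y assume yS: "y \<in> S"
        have "y - (x \<bullet> y) *\<^sub>R x \<in> S'" unfolding S'_def using yS xS xx less.prems(1)
          by (simp add: subspace_diff subspace_scale inner_diff_right)
        hence "y - (x \<bullet> y) *\<^sub>R x \<in> span (insert x B')"
          using B'(4) span_mono[of B' "insert x B'"] by auto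
        moreover have "(x \<bullet> y) *\<^sub>R x \<in> span (insert x B')"
          by (simp add: span_base span_scale)
        ultimately have "(y - (x \<bullet> y) *\<^sub>R x) + (x \<bullet> y) *\<^sub>R x \<in> span (insert x B')"
          by (rule span_add)
        thus "y \<in> span (insert x B')" by simp
      qed
    qed
  qed
qed

lemma spectral:
  fixes M :: "real^'k^'k"
  assumes sym: "transpose M = M"
  shows "\<exists>B. finite B \<and> pairwise orthogonal B \<and>
        (\<forall>b\<in>B. norm b = 1 \<and> M *v b = (b \<bullet> (M *v b)) *\<^sub>R b) \<and>
        (\<forall>x. x = (\<Sum>b\<in>B. (x \<bullet> b) *\<^sub>R b))"
proof -
  obtain B where B: "pairwise orthogonal B"
      "\<forall>b\<in>B. norm b = 1 \<and> M *v b = (b \<bullet> (M *v b)) *\<^sub>R b" "UNIV \<subseteq> span B"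
    using spectral_aux[OF sym, of UNIV] by auto
  have "0 \<notin> B" using B(2) by force
  hence fin: "finite B" using pairwise_orthogonal_independent[OF B(1)] finiteI_independent by blast
  have "x = (\<Sum>b\<in>B. (x \<bullet> b) *\<^sub>R b)" for x
  proof -
    define z where "z = x - (\<Sum>b\<in>B. (x \<bullet> b) *\<^sub>R b)"
    have "orthogonal z c" if cB: "c \<in> B" for c
    proof -
      have "(\<Sum>b\<in>B. (x \<bullet> b) * (b \<bullet> c)) = (\<Sum>b\<in>B. if b = c then x \<bullet> c else 0)"
      proof (rule sum.cong)
        fix b assume "b \<in> B"
        then show "(x \<bullet> b) * (b \<bullet> c) = (if b = c then x \<bullet> c else 0)"
          using B(1,2) cB by (auto simp: pairwise_def orthogonal_def norm_eq_1)
      qed simp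
      also have "\<dots> = x \<bullet> c" using fin cB by simp
      finally show ?thesis unfolding z_def orthogonal_def
        by (simp add: inner_diff_left inner_sum_left)
    qed
    hence "orthogonal z z" using B(3) orthogonal_to_span by blast
    thus ?thesis unfolding z_def orthogonal_def by simp
  qed
  thus ?thesis using fin B by blast
qed

lemma parseval:
  fixes B :: "('a::real_inner) set"
  assumes "\<forall>x. x = (\<Sum>b\<in>B. (x \<bullet> b) *\<^sub>R b)"
  shows "x \<bullet> y = (\<Sum>b\<in>B. (x \<bullet> b) * (y \<bullet> b))"
proof -
  have "x \<bullet> y = (\<Sum>b\<in>B. (x \<bullet> b) *\<^sub>R b) \<bullet> y" using assms by metis
  also have "\<dots> = (\<Sum>b\<in>B. (x \<bullet> b) * (y \<bullet> b))"
    by (simp add: inner_sum_left inner_sum_right inner_commute)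
  finally show ?thesis .
qed



definition Sf :: "real \<Rightarrow> real \<Rightarrow> real" where
  "Sf \<mu> t = (if \<mu> = 0 then t else sin (t * sqrt \<mu>) / sqrt \<mu>)"
definition Cf :: "real \<Rightarrow> real \<Rightarrow> real" where
  "Cf \<mu> t = (if \<mu> = 0 then 1 else cos (t * sqrt \<mu>))"
definition ck :: "nat \<Rightarrow> real" where
  "ck k = (-1)^k / fact (2*k+1)"
definition sig :: "real \<Rightarrow> real \<Rightarrow> real" where
  "sig t \<mu> = (if t = 0 \<or> \<mu> = 0 then 1 else sin (t * sqrt \<mu>) / (t * sqrt \<mu>))"

lemma t_sig: "t * sig t \<mu> = Sf \<mu> t"
  by (auto simp: sig_def Sf_def)

lemma sig_sums:
  assumes "\<mu> \<ge> 0"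
  shows "(\<lambda>k. ck k * (t^2*\<mu>)^k) sums sig t \<mu>"
proof (cases "t = 0 \<or> \<mu> = 0")
  case True
  hence "(\<lambda>k. ck k * (t^2*\<mu>)^k) = (\<lambda>k. ck k * 0^k)" by auto
  moreover have "ck 0 = 1" by (simp add: ck_def)
  ultimately show ?thesis using True powser_sums_zero[of ck] by (simp add: sig_def)
next
  case False
  define x where "x = t * sqrt \<mu>"
  have x0: "x \<noteq> 0" using False assms unfolding x_def by auto
  have xx: "x^2 = t^2*\<mu>" unfolding x_def using assms by (simp add: power_mult_distrib)
  have "(\<lambda>n. (- 1) ^ n / (fact (2 * n + 1)) * x ^ (2 * n + 1) / x) sums (sin x / x)"
    by (rule sums_divide[OF sin_paired])
  moreover have "(- 1) ^ n / (fact (2 * n + 1)) * x ^ (2 * n + 1) / x = ck n * (t^2*\<mu>)^n" for n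
  proof -
    have "x ^ (2 * n + 1) = (x^2)^n * x" by (simp add: power_mult power_add)
    thus ?thesis using x0 unfolding ck_def xx by simp
  qed
  ultimately show ?thesis using False unfolding sig_def x_def by simp
qed

lemma S_sums:
  assumes "\<mu> \<ge> 0"
  shows "(\<lambda>k. ck k * t^(2*k+1) * \<mu>^k) sums Sf \<mu> t"
proof -
  have "(\<lambda>k. t * (ck k * (t^2*\<mu>)^k)) sums (t * sig t \<mu>)"
    by (rule sums_mult[OF sig_sums[OF assms]])
  moreover have "t * (ck k * (t^2*\<mu>)^k) = ck k * t^(2*k+1) * \<mu>^k" for k
    by (simp add: power_mult_distrib power_mult power_add)
  ultimately show ?thesis by (simp add: t_sig)
qed

lemma Sf_deriv: "\<mu> \<ge> 0 \<Longrightarrow> (Sf \<mu> has_real_derivative Cf \<mu> t) (at t)"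
proof (cases "\<mu> = 0")
  case True
  then show ?thesis unfolding Sf_def Cf_def by (simp add: DERIV_ident)
next
  case False
  assume "\<mu> \<ge> 0"
  hence sp: "sqrt \<mu> > 0" using False by simp
  have D: "((\<lambda>t. sin (t * sqrt \<mu>) / sqrt \<mu>) has_real_derivative cos (t * sqrt \<mu>)) (at t)"
    using \<open>0 \<le> \<mu>\<close> False by (auto intro!: derivative_eq_intros simp: mult.assoc)
  moreover have "Sf \<mu> = (\<lambda>t. sin (t * sqrt \<mu>) / sqrt \<mu>)" using False by (auto simp: Sf_def)
  moreover have "Cf \<mu> t = cos (t * sqrt \<mu>)" using False by (simp add: Cf_def)
  ultimately show ?thesis by simp
qed

lemma Cf_deriv: "\<mu> \<ge> 0 \<Longrightarrow> (Cf \<mu> has_real_derivative (- \<mu> * Sf \<mu> t)) (at t)"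
proof (cases "\<mu> = 0")
  case True
  then show ?thesis unfolding Sf_def Cf_def by simp
next
  case False
  assume "\<mu> \<ge> 0"
  hence sp: "sqrt \<mu> > 0" using False by simp
  have "((\<lambda>t. cos (t * sqrt \<mu>)) has_real_derivative - sin (t * sqrt \<mu>) * sqrt \<mu>) (at t)"
    by (auto intro!: derivative_eq_intros)
  moreover have "Cf \<mu> = (\<lambda>t. cos (t * sqrt \<mu>))" using False by (auto simp: Cf_def)
  moreover have "- sin (t * sqrt \<mu>) * sqrt \<mu> = - \<mu> * Sf \<mu> t"
  proof -
    have "\<mu> = sqrt \<mu> * sqrt \<mu>" using \<open>\<mu> \<ge> 0\<close> by simp
    thus ?thesis using False sp unfolding Sf_def by (simp add: field_simps)
  qed
  ultimately show ?thesis by simp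
qed

fun Tc :: "nat \<Rightarrow> real poly" where
  "Tc 0 = 1"
| "Tc (Suc 0) = [:0,1:]"
| "Tc (Suc (Suc n)) = [:0,2:] * Tc (Suc n) - Tc n"

lemma Tc_cos: "poly (Tc n) (cos \<theta>) = cos (real n * \<theta>)"
proof (induction n rule: Tc.induct)
  case (3 n)
  have a: "cos (real (Suc (Suc n)) * \<theta>) = cos (real (Suc n) * \<theta>) * cos \<theta> - sin (real (Suc n) * \<theta>) * sin \<theta>"
    using cos_add[of "real (Suc n) * \<theta>" \<theta>] by (simp add: algebra_simps)
  have b: "cos (real n * \<theta>) = cos (real (Suc n) * \<theta>) * cos \<theta> + sin (real (Suc n) * \<theta>) * sin \<theta>"
    using cos_diff[of "real (Suc n) * \<theta>" \<theta>] by (simp add: algebra_simps)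
  show ?case using 3 a b by (simp add: algebra_simps)
qed simp_all

lemma Tc_deg: "degree (Tc n) \<le> n"
proof (induction n rule: Tc.induct)
  case (3 n)
  have "degree ([:0,2:] * Tc (Suc n)) \<le> Suc (Suc n)"
    using degree_mult_le[of "[:0,2:]" "Tc (Suc n)"] 3(1) by simp
  thus ?case using 3(2) degree_diff_le by (simp add: degree_diff_le)
qed simp_all

lemma Tc_bound:
  assumes "\<bar>x\<bar> \<le> 1"
  shows "\<bar>poly (Tc n) x\<bar> \<le> 1"
proof -
  have "x = cos (arccos x)" using assms by simp
  hence "poly (Tc n) x = cos (real n * arccos x)" by (metis Tc_cos)
  thus ?thesis by simp
qed

lemma cos_pow:
  "(2 * cos \<phi>)^n = (\<Sum>i\<le>n. real (n choose i) * cos ((2 * real i - real n) * \<phi>))"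
proof -
  have e: "complex_of_real (2 * cos \<phi>) = cis \<phi> + cis (- \<phi>)"
    by (simp add: complex_eq_iff cis.sel)
  have "complex_of_real ((2 * cos \<phi>)^n) = (cis \<phi> + cis (- \<phi>))^n"
    by (simp only: of_real_power e)
  also have "\<dots> = (\<Sum>i\<le>n. of_nat (n choose i) * cis \<phi> ^ i * cis (- \<phi>) ^ (n - i))"
    by (rule binomial_ring)
  also have "\<dots> = (\<Sum>i\<le>n. of_nat (n choose i) * cis ((2 * real i - real n) * \<phi>))"
  proof (rule sum.cong)
    fix i assume "i \<in> {..n}"
    hence "i \<le> n" by simp
    hence e1: "real i * \<phi> + real (n - i) * - \<phi> = (2 * real i - real n) * \<phi>"
      by (simp add: of_nat_diff algebra_simps)
    have "cis \<phi> ^ i * cis (- \<phi>) ^ (n - i) = cis (real i * \<phi> + real (n - i) * - \<phi>)"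
      by (simp only: Complex.DeMoivre cis_mult)
    thus "of_nat (n choose i) * cis \<phi> ^ i * cis (- \<phi>) ^ (n - i) =
          of_nat (n choose i) * cis ((2 * real i - real n) * \<phi>)"
      unfolding e1 by (simp add: mult.assoc)
  qed simp
  finally have "complex_of_real ((2 * cos \<phi>)^n) = (\<Sum>i\<le>n. of_nat (n choose i) * cis ((2 * real i - real n) * \<phi>))" .
  hence "Re (complex_of_real ((2 * cos \<phi>)^n)) = Re (\<Sum>i\<le>n. of_nat (n choose i) * cis ((2 * real i - real n) * \<phi>))"
    by simp
  thus ?thesis by (simp add: Re_sum cis.sel)
qed

definition cdist :: "nat \<Rightarrow> nat \<Rightarrow> nat" where
  "cdist k i = nat \<bar>int k - int i\<bar>"

lemma pow_cheb:
  assumes "0 \<le> x" "x \<le> 1"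
  shows "x^k = (1/4^k) * (\<Sum>i\<le>2*k. real ((2*k) choose i) * poly (Tc (cdist k i)) (2*x-1))"
proof -
  define \<phi> where "\<phi> = arccos (sqrt x)"
  have c: "cos \<phi> = sqrt x" unfolding \<phi>_def proof (intro cos_arccos)
    have "0 \<le> sqrt x" using assms by simp
    thus "-1 \<le> sqrt x" by linarith
    show "sqrt x \<le> 1" using assms by simp
  qed
  have c2: "2*x-1 = cos (2*\<phi>)" using c assms by (simp add: cos_double_cos)
  have "x^k = (cos \<phi>)^(2*k)" using c assms by (simp add: power_mult)
  also have "\<dots> = (1/4^k) * (2 * cos \<phi>)^(2*k)"
    by (simp add: power_mult_distrib power_mult)
  also have "(2 * cos \<phi>)^(2*k) = (\<Sum>i\<le>2*k. real ((2*k) choose i) * poly (Tc (cdist k i)) (2*x-1))"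
    unfolding cos_pow
  proof (rule sum.cong)
    fix i
    have "real (cdist k i) = \<bar>real k - real i\<bar>" unfolding cdist_def by simp
    have ca: "cos (\<bar>r\<bar> * a) = cos (r * a)" for r a :: real
    proof (cases "r \<ge> 0")
      case False
      hence "\<bar>r\<bar> * a = - (r * a)" by simp
      thus ?thesis by (simp only: cos_minus)
    qed simp
    have "(2 * real i - real (2*k)) * \<phi> = - ((real k - real i) * (2*\<phi>))" by (simp add: algebra_simps)
    hence "cos ((2 * real i - real (2*k)) * \<phi>) = cos ((real k - real i) * (2*\<phi>))"
      by (simp only: cos_minus)
    hence "cos (real (cdist k i) * (2*\<phi>)) = cos ((2 * real i - real (2*k)) * \<phi>)"
      using ca \<open>real (cdist k i) = \<bar>real k - real i\<bar>\<close> by simp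
    thus "real ((2*k) choose i) * cos ((2 * real i - real (2*k)) * \<phi>) =
          real ((2*k) choose i) * poly (Tc (cdist k i)) (2*x-1)"
      by (simp add: c2 Tc_cos)
  qed simp
  finally show ?thesis .
qed



lemma hl1: fixes C F1 F2 Q :: real assumes "C*F2*Q \<le> F1" "F1 > 0" "F2 > 0" "Q > 0" shows "C/F1 \<le> (1/Q)/F2"
proof -
  have "C * (F2*Q) \<le> F1" using assms(1) by (simp add: mult.assoc)
  hence "C / F1 \<le> 1 / (F2*Q)" using assms by (simp add: divide_simps ac_simps)
  thus ?thesis by (simp add: mult.commute)
qed
lemma hl2: fixes a b c F :: real assumes "a \<le> b * c" "F > 0" shows "a/F \<le> c/F*b"
  by (smt (verit, ccfv_SIG) assms(1,2) divide_divide_eq_left'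
    divide_le_cancel mult.commute times_divide_eq_right
    zero_le_square)

lemma fact_pow_le: "fact a * (a+1)^j \<le> (fact (a+j) :: nat)"
proof (induction j)
  case (Suc j)
  have "fact a * (a+1)^Suc j = (a+1) * (fact a * (a+1)^j)" by (simp add: algebra_simps)
  also have "\<dots> \<le> (a+j+1) * fact (a+j)" using Suc by (intro mult_mono) auto
  also have "\<dots> = fact (a + Suc j)" by (simp add: algebra_simps)
  finally show ?case .
qed simp

lemma binom_term_nat:
  assumes m2: "m \<ge> 2" and k: "k = m - 1 + j" and ij: "i \<le> j"
  shows "((2*k) choose i) * fact (2*m-1) * 3^j \<le> (fact (2*k+1) :: nat)"
proof -
  have ik: "i \<le> 2*k" using k ij by simp
  have bf: "fact i * fact (2*k - i) * ((2*k) choose i) = (fact (2*k) :: nat)"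
    by (rule binomial_fact_lemma[OF ik])
  have a1: "fact (2*m-2) * 3^j \<le> (fact (2*m-2+j) :: nat)"
  proof -
    have "fact (2*m-2) * 3^j \<le> fact (2*m-2) * (2*m-2+1)^j"
      using m2 by (intro mult_le_mono2 power_mono) auto
    also have "\<dots> \<le> fact (2*m-2+j)" by (rule fact_pow_le)
    finally show ?thesis .
  qed
  have a2: "fact (2*m-2+j) \<le> (fact (2*k-i) :: nat)"
    using k ij m2 by (intro fact_mono) auto
  have f2: "fact (2*m-1) = (2*m-1) * (fact (2*m-2) :: nat)"
  proof -
    have e: "2*m-1 = Suc (2*m-2)" using m2 by simp
    show ?thesis unfolding e by simp
  qed
  have "((2*k) choose i) * fact (2*m-1) * 3^j = ((2*k) choose i) * (2*m-1) * (fact (2*m-2) * 3^j)"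
    by (simp only: f2 mult.assoc)
  also have "\<dots> \<le> ((2*k) choose i) * (2*k+1) * fact (2*k-i)"
    using a1 a2 k m2 by (intro mult_mono) auto
  also have "\<dots> \<le> ((2*k) choose i) * (2*k+1) * fact (2*k-i) * fact i"
    by simp
  also have "\<dots> = (2*k+1) * fact (2*k)" using bf by (simp add: algebra_simps)
  also have "\<dots> = fact (2*k+1)" by simp
  finally show ?thesis .
qed

lemma binom_term:
  assumes m2: "m \<ge> 2" and k: "k = m - 1 + j" and ij: "i \<le> j"
  shows "real ((2*k) choose i) / fact (2*k+1) * (1/4)^k \<le> ((1/4)^(m-1) / fact (2*m-1)) * (1/12)^j"
proof -
  have n: "real ((2*k) choose i) * fact (2*m-1) * 3^j \<le> fact (2*k+1)"
  proof -
    have "real (((2*k) choose i) * fact (2*m-1) * 3^j) \<le> real (fact (2*k+1))"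
      by (simp only: of_nat_le_iff) (rule binom_term_nat[OF assms])
    thus ?thesis by (simp add: algebra_simps)
  qed
  have "real ((2*k) choose i) / fact (2*k+1) \<le> (1/3^j) / fact (2*m-1)"
    by (rule hl1[OF n]) auto
  moreover have "(1/3::real)^j = 1/3^j" by (simp add: power_one_over)
  ultimately have "real ((2*k) choose i) / fact (2*k+1) \<le> (1/3)^j / fact (2*m-1)" by simp
  hence "real ((2*k) choose i) / fact (2*k+1) * ((1/4)^(m-1) * (1/4)^j) \<le> (1/3)^j / fact (2*m-1) * ((1/4)^(m-1) * (1/4)^j)"
    by (intro mult_right_mono) auto
  moreover have "(1/4::real)^k = (1/4)^(m-1) * (1/4)^j" using k by (simp add: power_add)
  moreover have "(1/12::real)^j = (1/3)^j * (1/4)^j" by (simp add: power_mult_distrib[symmetric])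
  ultimately show ?thesis by (simp add: field_simps)
qed

lemma ck_abs: "\<bar>ck k\<bar> = 1 / fact (2*k+1)"
  by (simp add: ck_def abs_mult power_abs)

lemma tail_term:
  fixes bb :: "nat \<Rightarrow> real"
  assumes m2: "m \<ge> 2" and t0: "0 \<le> t" and t1: "t \<le> 1"
    and bbd: "\<bar>bb k\<bar> \<le> (1/4^k) * (\<Sum>i\<le>2*k. real ((2*k) choose i) * (if m - 1 \<le> cdist k i then 1 else 0))"
  shows "\<bar>ck k * t^(2*k+1) * bb k\<bar> \<le>
    (if k < m - 1 then 0 else 2 * ((1/4)^(m-1) / fact (2*m-1)) * t^(2*m-1) * (1/6)^(k-(m-1)))"
proof (cases "k < m - 1")
  case True
  have "(\<Sum>i\<le>2*k. real ((2*k) choose i) * (if m - 1 \<le> cdist k i then 1 else 0)) = 0"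
  proof (rule sum.neutral, intro ballI)
    fix i assume "i \<in> {..2*k}"
    hence "cdist k i \<le> k" unfolding cdist_def by auto
    thus "real ((2*k) choose i) * (if m - 1 \<le> cdist k i then 1 else 0) = 0" using True by auto
  qed
  hence "bb k = 0" using bbd by simp
  thus ?thesis using True by simp
next
  case False
  define j where "j = k - (m-1)"
  have k: "k = m - 1 + j" using False unfolding j_def by simp
  define B where "B = (1/4::real)^(m-1) / fact (2*m-1)"
  have B0: "B \<ge> 0" unfolding B_def by simp
  have tm: "real ((2*k) choose i) * (if m - 1 \<le> cdist k i then 1 else 0) / fact (2*k+1) * (1/4)^k
      \<le> B * (1/12)^j * (of_bool (i \<le> j) + of_bool (2*k - j \<le> i))" if iI: "i \<in> {..2*k}" for i
  proof (cases "m - 1 \<le> cdist k i")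
    case True
    define X where "X = real ((2*k) choose i) / fact (2*k+1) * (1/4::real)^k"
    define q where "q = B * (1/12::real)^j"
    have q0: "0 \<le> q" unfolding q_def using B0 by simp
    have L: "real ((2*k) choose i) * (if m - 1 \<le> cdist k i then 1 else 0) / fact (2*k+1) * (1/4)^k = X"
      using True unfolding X_def by simp
    have "i \<le> j \<or> 2*k - i \<le> j" using True unfolding cdist_def j_def using iI by auto
    then show ?thesis
    proof
      assume ij: "i \<le> j"
      have "X \<le> q" unfolding X_def q_def B_def by (rule binom_term[OF m2 k ij])
      moreover have "q * (of_bool (i \<le> j) + of_bool (2*k - j \<le> i)) = q + q * of_bool (2*k - j \<le> i)"
        using ij by (simp add: algebra_simps)
      moreover have "0 \<le> q * of_bool (2*k - j \<le> i)" using q0 by simp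
      ultimately show ?thesis unfolding L q_def[symmetric] by linarith
    next
      assume ij: "2*k - i \<le> j"
      have "real ((2*k) choose (2*k-i)) / fact (2*k+1) * (1/4)^k \<le> q"
        unfolding q_def B_def by (rule binom_term[OF m2 k ij])
      moreover have "(2*k) choose (2*k-i) = (2*k) choose i" using iI by (simp add: binomial_symmetric[symmetric])
      ultimately have "X \<le> q" unfolding X_def by simp
      moreover have "2*k - j \<le> i" using ij iI by simp
      hence "q * (of_bool (i \<le> j) + of_bool (2*k - j \<le> i)) = q + q * of_bool (i \<le> j)"
        by (simp add: algebra_simps)
      moreover have "0 \<le> q * of_bool (i \<le> j)" using q0 by simp
      ultimately show ?thesis unfolding L q_def[symmetric] by linarith
    qed
  next
    case False
    then show ?thesis using B0 by simp
  qed
  have c1: "(\<Sum>i\<le>2*k. (of_bool (i \<le> j) :: real)) = real (j+1)"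
  proof -
    have e: "{..2*k} \<inter> {i. i \<le> j} = {..j}" using k by auto
    have "(\<Sum>i\<le>2*k. (of_bool (i \<le> j) :: real)) = of_nat (card ({..2*k} \<inter> {i. i \<le> j}))"
      using sum_of_bool_eq[of "{..2*k}" "\<lambda>i. i \<le> j"] by simp
    thus ?thesis unfolding e by simp
  qed
  have c2: "(\<Sum>i\<le>2*k. (of_bool (2*k - j \<le> i) :: real)) = real (j+1)"
  proof -
    have "{..2*k} \<inter> {i. 2*k - j \<le> i} = {2*k-j..2*k}" by auto
    moreover have "card {2*k-j..2*k} = j + 1" using k by simp
    moreover have "(\<Sum>i\<le>2*k. (of_bool (2*k - j \<le> i) :: real)) = of_nat (card ({..2*k} \<inter> {i. 2*k - j \<le> i}))"
      using sum_of_bool_eq[of "{..2*k}" "\<lambda>i. 2*k - j \<le> i"] by simp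
    ultimately show ?thesis by simp
  qed
  have "\<bar>bb k\<bar> / fact (2*k+1) \<le> (\<Sum>i\<le>2*k. real ((2*k) choose i) * (if m - 1 \<le> cdist k i then 1 else 0)) / fact (2*k+1) * (1/4)^k"
    using hl2[OF bbd, of "fact (2*k+1)"] by (simp add: power_one_over)
  also have "\<dots> = (\<Sum>i\<le>2*k. real ((2*k) choose i) * (if m - 1 \<le> cdist k i then 1 else 0) / fact (2*k+1) * (1/4)^k)"
    by (simp add: sum_divide_distrib sum_distrib_right)
  also have "\<dots> \<le> (\<Sum>i\<le>2*k. B * (1/12)^j * (of_bool (i \<le> j) + of_bool (2*k - j \<le> i)))"
    by (rule sum_mono[OF tm])
  also have "\<dots> = B * (1/12)^j * (2 * real (j+1))"
    by (simp add: sum_distrib_left[symmetric] sum.distrib c1 c2)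
  also have "\<dots> \<le> B * (1/12)^j * (2 * 2^j)"
  proof -
    have "j + 1 \<le> 2^j" using Suc_leI[OF less_exp[of j]] by simp
    hence "real (j+1) \<le> 2^j" by (metis of_nat_le_iff of_nat_numeral of_nat_power)
    thus ?thesis using B0 by (intro mult_left_mono) auto
  qed
  also have "\<dots> = 2 * B * (1/6)^j"
    by (simp add: power_divide field_simps power_mult_distrib[symmetric])
  finally have bk: "\<bar>bb k\<bar> / fact (2*k+1) \<le> 2 * B * (1/6)^j" .
  have tp: "t^(2*k+1) \<le> t^(2*m-1)" using t0 t1 k m2 by (intro power_decreasing) auto
  have "\<bar>ck k * t^(2*k+1) * bb k\<bar> = t^(2*k+1) * (\<bar>bb k\<bar> / fact (2*k+1))"
    using t0 by (simp add: abs_mult ck_abs)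
  also have "\<dots> \<le> t^(2*m-1) * (2 * B * (1/6)^j)"
    using tp bk t0 by (intro mult_mono) auto
  finally show ?thesis using False unfolding B_def j_def by (simp add: algebra_simps)
qed

lemma tail_bound:
  fixes bb :: "nat \<Rightarrow> real"
  assumes m2: "m \<ge> 2" and t0: "0 \<le> t" and t1: "t \<le> 1"
    and bbd: "\<And>k. \<bar>bb k\<bar> \<le> (1/4^k) * (\<Sum>i\<le>2*k. real ((2*k) choose i) * (if m - 1 \<le> cdist k i then 1 else 0))"
  shows "summable (\<lambda>k. ck k * t^(2*k+1) * bb k) \<and>
     \<bar>suminf (\<lambda>k. ck k * t^(2*k+1) * bb k)\<bar> \<le> 8 * ((1/4)^(m-1) / fact (2*m-1)) * t^(2*m-1)"
proof -
  define D where "D = 2 * ((1/4::real)^(m-1) / fact (2*m-1)) * t^(2*m-1)"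
  have D0: "D \<ge> 0" unfolding D_def using t0 by simp
  define g where "g k = (if k < m - 1 then 0 else D * (1/6)^(k-(m-1)))" for k
  have ab: "\<bar>ck k * t^(2*k+1) * bb k\<bar> \<le> g k" for k
    unfolding g_def D_def using tail_term[where bb=bb and k=k, OF m2 t0 t1 bbd] by simp
  have "(\<lambda>i. g (i + (m-1))) = (\<lambda>i. D * (1/6)^i)" unfolding g_def by auto
  moreover have "(\<lambda>i. D * (1/6::real)^i) sums (D * (1 / (1 - 1/6)))"
    by (intro sums_mult geometric_sums) simp
  ultimately have g1: "(\<lambda>i. g (i + (m-1))) sums (D * (1 / (1 - 1/6)))" by (simp only:)
  have gs: "g sums (D * (1 / (1 - 1/6)) + (\<Sum>i<m-1. g i))"
    using g1 sums_iff_shift[of g "m-1" "D * (1 / (1 - 1/6))"] by blast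
  have "(\<Sum>i<m-1. g i) = 0" unfolding g_def by simp
  hence gs': "g sums (D * (6/5))" using gs by simp
  have sa: "summable (\<lambda>k. \<bar>ck k * t^(2*k+1) * bb k\<bar>)"
    by (rule summable_comparison_test[OF _ sums_summable[OF gs']]) (use ab in auto)
  hence s: "summable (\<lambda>k. ck k * t^(2*k+1) * bb k)" by (rule summable_rabs_cancel)
  have "\<bar>suminf (\<lambda>k. ck k * t^(2*k+1) * bb k)\<bar> \<le> suminf (\<lambda>k. \<bar>ck k * t^(2*k+1) * bb k\<bar>)"
    by (rule summable_rabs[OF sa])
  also have "\<dots> \<le> suminf g" by (rule suminf_le[OF ab sa sums_summable[OF gs']])
  also have "\<dots> = D * (6/5)" using gs' sums_unique by metis
  also have "\<dots> \<le> 4 * D" using D0 by simp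
  finally show ?thesis using s unfolding D_def by simp
qed



lemma dot_tr:
  fixes M :: "real^'n^'m"
  shows "(M *v x) \<bullet> y = x \<bullet> (transpose M *v y)"
proof -
  have "(M *v x) \<bullet> y = (x v* transpose M) \<bullet> y" by simp
  also have "\<dots> = x \<bullet> (transpose M *v y)" by (rule dot_lmul_matrix)
  finally show ?thesis .
qed

lemma sum_mv: "finite S \<Longrightarrow> (\<Sum>b\<in>S. M b) *v x = (\<Sum>b\<in>S. M b *v x)"
  by (induction rule: finite_induct) (simp_all add: matrix_vector_mult_add_rdistrib)

lemma delta_sum:
  fixes f :: "'a::finite \<Rightarrow> real"
  shows "(\<Sum>k\<in>UNIV. f k * (if k = j then c else 0)) = f j * c"
proof -
  have "(\<Sum>k\<in>UNIV. f k * (if k = j then c else 0)) = (\<Sum>k\<in>UNIV. if k = j then f k * c else 0)"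
    by (rule sum.cong) auto
  also have "\<dots> = f j * c" by (simp add: sum.delta)
  finally show ?thesis .
qed

lemma mv_axis: "((M::real^'a^'b) *v axis j 1) $ i = M $ i $ j"
proof -
  have "(M *v axis j 1) $ i = (\<Sum>k\<in>UNIV. M $ i $ k * (if k = j then 1 else 0))"
    unfolding matrix_vector_mult_def axis_def by simp
  also have "\<dots> = M $ i $ j * 1" by (rule delta_sum)
  finally show ?thesis by simp
qed

lemma ol_mv: "(outer_last w *v x) = (x $ last_idx) *\<^sub>R w"
proof (subst vec_eq_iff, intro allI)
  fix i
  have "(outer_last w *v x) $ i = (\<Sum>j\<in>UNIV. x $ j * (if j = last_idx then w $ i else 0))"
    by (simp add: outer_last_def matrix_vector_mult_def mult.commute)
  also have "\<dots> = x $ last_idx * w $ i" by (rule delta_sum)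
  finally show "(outer_last w *v x) $ i = ((x $ last_idx) *\<^sub>R w) $ i" by simp
qed

lemma mpow_Suc: "mpow H (Suc k) = H ** mpow H k"
  unfolding mpow_def by simp

lemma mpow_0: "mpow H 0 = mat 1"
  unfolding mpow_def by simp

lemma mpow_scale: "mpow (c *\<^sub>R H) k = c^k *\<^sub>R mpow H k"
  by (induction k) (simp_all add: mpow_0 mpow_Suc matrix_scalar_ac scalar_matrix_assoc[symmetric])

lemma mpow_eig: "M *v b = \<mu> *\<^sub>R b \<Longrightarrow> mpow M k *v b = \<mu>^k *\<^sub>R b"
proof (induction k)
  case 0 then show ?case by (simp add: mpow_0)
next
  case (Suc k)
  have "mpow M (Suc k) *v b = M *v (mpow M k *v b)"
    by (simp add: mpow_Suc matrix_vector_mul_assoc)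
  also have "\<dots> = \<mu>^Suc k *\<^sub>R b" using Suc by (simp add: matrix_vector_mult_scaleR)
  finally show ?case .
qed

definition outerp :: "real^'k \<Rightarrow> real^'k^'k" where
  "outerp b = (\<chi> i j. b$i * b$j)"

lemma outerp_mv: "outerp b *v x = (b \<bullet> x) *\<^sub>R b"
proof (subst vec_eq_iff, intro allI)
  fix i
  have "(outerp b *v x)$i = (\<Sum>j\<in>UNIV. b$i * (b$j * x$j))"
    by (simp add: outerp_def matrix_vector_mult_def mult.assoc)
  also have "\<dots> = b$i * (\<Sum>j\<in>UNIV. b$j * x$j)" by (simp add: sum_distrib_left)
  also have "(\<Sum>j\<in>UNIV. b$j * x$j) = b \<bullet> x" by (simp add: inner_vec_def)
  finally show "(outerp b *v x)$i = ((b \<bullet> x) *\<^sub>R b)$i" by (simp add: mult.commute)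
qed

lemma hvd_scale: "(f has_real_derivative f') (at t) \<Longrightarrow>
   ((\<lambda>s. f s *\<^sub>R c) has_vector_derivative (f' *\<^sub>R c)) (at t)"
  using has_vector_derivative_scaleR[of f f' t UNIV "\<lambda>_. c" 0] has_vector_derivative_const
  by simp

definition ipos :: "'m::{finite,linorder} \<Rightarrow> nat" where
  "ipos a = card {y. y < a}"

lemma ipos_mono: "a \<le> d \<Longrightarrow> ipos a \<le> ipos d"
  unfolding ipos_def by (rule card_mono) auto

lemma ipos_gap: "\<not> (\<exists>k. a < k \<and> k < d) \<Longrightarrow> a < d \<Longrightarrow> ipos d \<le> ipos a + 1"
proof -
  assume n: "\<not> (\<exists>k. a < k \<and> k < d)" and ad: "a < d"
  have "{y. y < d} \<subseteq> insert a {y. y < a}"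
  proof
    fix y assume "y \<in> {y. y < d}"
    hence "y < d" by simp
    hence "\<not> a < y" using n by blast
    thus "y \<in> insert a {y. y < a}" by auto
  qed
  hence "card {y. y < d} \<le> card (insert a {y. y < a})" by (rule card_mono[rotated]) simp
  also have "\<dots> \<le> card {y. y < a} + 1" by (simp add: card_insert_if)
  finally show ?thesis unfolding ipos_def .
qed

lemma tri_adj:
  assumes "tridiagonal H" "H $ a $ d \<noteq> 0"
  shows "ipos a \<le> ipos d + 1"
proof (cases "a < d")
  case True
  then show ?thesis using ipos_mono[OF less_imp_le[OF True]] by simp
next
  case False
  show ?thesis
  proof (cases "a = d")
    case False
    with \<open>\<not> a < d\<close> have da: "d < a" by simp
    have "\<not> (\<exists>k. d < k \<and> k < a)" using assms unfolding tridiagonal_def by blast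
    from ipos_gap[OF this da] show ?thesis .
  qed simp
qed

lemma tri_pow:
  assumes tri: "tridiagonal H"
  shows "mpow H j $ a $ c \<noteq> 0 \<Longrightarrow> ipos a \<le> ipos c + j"
proof (induction j arbitrary: a)
  case 0
  hence "a = c" by (simp add: mpow_0 mat_def split: if_splits)
  then show ?case by simp
next
  case (Suc j)
  have "(\<Sum>d\<in>UNIV. H $ a $ d * mpow H j $ d $ c) \<noteq> 0"
    using Suc.prems by (simp add: mpow_Suc matrix_matrix_mult_def)
  then obtain d where "H $ a $ d * mpow H j $ d $ c \<noteq> 0"
  proof -
    assume r: "\<And>d. H $ a $ d * mpow H j $ d $ c \<noteq> 0 \<Longrightarrow> thesis"
    show thesis
    proof (rule ccontr)
      assume "\<not> thesis"
      hence "\<forall>d\<in>UNIV. H $ a $ d * mpow H j $ d $ c = 0" using r by blast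
      hence "(\<Sum>d\<in>UNIV. H $ a $ d * mpow H j $ d $ c) = 0" by (rule sum.neutral)
      thus False using \<open>(\<Sum>d\<in>UNIV. H $ a $ d * mpow H j $ d $ c) \<noteq> 0\<close> by simp
    qed
  qed
  hence "H $ a $ d \<noteq> 0" "mpow H j $ d $ c \<noteq> 0" by auto
  from tri_adj[OF tri this(1)] Suc.IH[OF this(2)] show ?case by linarith
qed

lemma ipos_first: "ipos (first_idx :: 'm::{finite,linorder}) = 0"
proof -
  have "{y::'m. y < first_idx} = {}" unfolding first_idx_def
    by (auto simp: not_less intro: Min_le)
  thus ?thesis unfolding ipos_def by simp
qed

lemma ipos_last: "ipos (last_idx :: 'm::{finite,linorder}) = CARD('m) - 1"
proof -
  have "{y::'m. y < last_idx} = UNIV - {last_idx}" unfolding last_idx_def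
  proof (intro set_eqI iffI)
    fix x :: 'm assume "x \<in> {y. y < Max UNIV}" thus "x \<in> UNIV - {Max UNIV}" by auto
  next
    fix x :: 'm assume a: "x \<in> UNIV - {Max UNIV}"
    have "x \<le> Max UNIV" by (rule Max_ge) auto
    thus "x \<in> {y. y < Max UNIV}" using a by (simp add: order.strict_iff_order)
  qed
  thus ?thesis unfolding ipos_def by (simp add: card_Diff_singleton)
qed

lemma tri_zero:
  fixes H :: "real^('m::{finite,linorder})^('m::{finite,linorder})"
  assumes "tridiagonal H" "j < card (UNIV :: ('m::{finite,linorder}) set) - 1"
  shows "mpow H j $ last_idx $ first_idx = 0"
proof (rule ccontr)
  assume "mpow H j $ last_idx $ first_idx \<noteq> 0"
  from tri_pow[OF assms(1) this] have "ipos (last_idx::'m) \<le> ipos (first_idx::'m) + j" .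
  moreover have "ipos (last_idx::'m) = card (UNIV :: 'm set) - 1" by (rule ipos_last)
  moreover have "ipos (first_idx::'m) = 0" by (rule ipos_first)
  ultimately show False using assms(2) by linarith
qed



theorem proposition3p4:
  fixes A :: "real^'n^'n"
    and v w :: "real^'n"
    and V :: "real^('m::{finite,linorder})^'n"
    and H :: "real^('m::{finite,linorder})^('m::{finite,linorder})"
    and h :: real
    and y r :: "real \<Rightarrow> real^'n"
  assumes symA: "transpose A = A"
    and spec: "\<And>l. is_eigenvalue A l \<Longrightarrow> 0 \<le> l \<and> l \<le> 1"
    and nv: "norm v = 1"
    and m2: "CARD('m) \<ge> 2"
    and orth: "transpose V ** V = mat 1"
    and col1: "column first_idx V = v"
    and nw: "norm w = 1"
    and worth: "transpose V *v w = 0"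
    and Hdef: "H = transpose V ** A ** V"
    and symH: "transpose H = H"
    and tri: "tridiagonal H"
    and hpos: "h \<ge> 0"
    and arnoldi: "A ** V = V ** H + h *\<^sub>R outer_last w"
    and ydef: "\<And>t. y t = V *v ((t *\<^sub>R mat_sigma ((t^2) *\<^sub>R H)) *v axis first_idx 1)"
    and rdef: "\<And>t. r t = - (A *v y t)
                 - vector_derivative (\<lambda>s. vector_derivative y (at s)) (at t)"
  shows "\<forall>t. 0 \<le> t \<and> t \<le> 1 \<longrightarrow>
           norm (r t) \<le> 16 * ((t/2)^(2*CARD('m)-1) / fact (2*CARD('m)-1))"
proof -
  define fi where "fi = (first_idx :: 'm)"
  define la where "la = (last_idx :: 'm)"
  define m where "m = CARD('m)"
  obtain BA where BA: "finite BA" "pairwise orthogonal BA"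
      "\<forall>b\<in>BA. norm b = 1 \<and> A *v b = (b \<bullet> (A *v b)) *\<^sub>R b" "\<forall>x. x = (\<Sum>b\<in>BA. (x \<bullet> b) *\<^sub>R b)"
    using spectral[OF symA] by (elim exE conjE) (rule that)
  define lamA where "lamA b = b \<bullet> (A *v b)" for b
  have lamAb: "0 \<le> lamA b \<and> lamA b \<le> 1" if "b \<in> BA" for b
  proof (rule spec)
    have "norm b = 1" using BA(3) that by blast
    hence "b \<noteq> 0" by auto
    moreover have "A *v b = lamA b *\<^sub>R b" using BA(3) that unfolding lamA_def by blast
    ultimately show "is_eigenvalue A (lamA b)" unfolding is_eigenvalue_def by blast
  qed
  have Adot: "(A *v x) \<bullet> b = lamA b * (x \<bullet> b)" if "b \<in> BA" for x b
  proof -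
    have ab: "A *v b = lamA b *\<^sub>R b" using BA(3) that unfolding lamA_def by blast
    have "(A *v x) \<bullet> b = x \<bullet> (A *v b)" using sym_dot[OF symA] .
    thus ?thesis using ab by simp
  qed
  have xx2: "x \<bullet> x = (\<Sum>b\<in>BA. (x \<bullet> b)^2)" for x
  proof -
    have "x \<bullet> x = (\<Sum>b\<in>BA. (x \<bullet> b) * (x \<bullet> b))" by (rule parseval[OF BA(4)])
    thus ?thesis by (simp add: power2_eq_square)
  qed
  have qA: "0 \<le> x \<bullet> (A *v x) \<and> x \<bullet> (A *v x) \<le> x \<bullet> x" for x
  proof -
    have "x \<bullet> (A *v x) = (\<Sum>b\<in>BA. (x \<bullet> b) * ((A *v x) \<bullet> b))" by (rule parseval[OF BA(4)])
    also have "\<dots> = (\<Sum>b\<in>BA. lamA b * (x \<bullet> b)^2)"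
      by (rule sum.cong[OF refl]) (simp add: Adot power2_eq_square)
    finally have e1: "x \<bullet> (A *v x) = (\<Sum>b\<in>BA. lamA b * (x \<bullet> b)^2)" .
    note e2 = xx2[of x]
    have "0 \<le> (\<Sum>b\<in>BA. lamA b * (x \<bullet> b)^2)" using lamAb by (intro sum_nonneg) simp
    moreover have "(\<Sum>b\<in>BA. lamA b * (x \<bullet> b)^2) \<le> (\<Sum>b\<in>BA. (x \<bullet> b)^2)"
      using lamAb by (intro sum_mono) (simp add: mult_left_le_one_le)
    ultimately show ?thesis using e1 e2 by simp
  qed
  have nA: "norm (A *v x) \<le> norm x" for x
  proof -
    have "(A *v x) \<bullet> (A *v x) = (\<Sum>b\<in>BA. ((A *v x) \<bullet> b) * ((A *v x) \<bullet> b))"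
      by (rule parseval[OF BA(4)])
    also have "\<dots> = (\<Sum>b\<in>BA. (lamA b)^2 * (x \<bullet> b)^2)"
      by (rule sum.cong[OF refl]) (simp add: Adot power2_eq_square)
    also have "\<dots> \<le> (\<Sum>b\<in>BA. (x \<bullet> b)^2)"
    proof (intro sum_mono)
      fix b assume "b \<in> BA"
      hence "(lamA b)^2 \<le> 1" using lamAb by (simp add: abs_square_le_1)
      thus "(lamA b)^2 * (x \<bullet> b)^2 \<le> (x \<bullet> b)^2" by (simp add: mult_left_le_one_le)
    qed
    also have "\<dots> = x \<bullet> x" using xx2[of x] by simp
    finally have "(norm (A *v x))^2 \<le> (norm x)^2" by (simp add: power2_norm_eq_inner)
    thus ?thesis by (rule power2_le_imp_le) simp
  qed
  have VV: "(V *v x) \<bullet> (V *v z) = x \<bullet> z" for x z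
  proof -
    have "(V *v x) \<bullet> (V *v z) = x \<bullet> (transpose V *v (V *v z))" by (rule dot_tr)
    also have "\<dots> = x \<bullet> z" by (simp add: matrix_vector_mul_assoc orth)
    finally show ?thesis .
  qed
  have nV: "norm (V *v x) = norm x" for x
    using VV[of x x] by (simp add: norm_eq_sqrt_inner)
  have wV: "w \<bullet> (V *v x) = 0" for x
  proof -
    have "(V *v x) \<bullet> w = x \<bullet> (transpose V *v w)" by (rule dot_tr)
    thus ?thesis using worth by (simp add: inner_commute)
  qed
  have Hq: "u \<bullet> (H *v u) = (V *v u) \<bullet> (A *v (V *v u))" for u
  proof -
    have "H *v u = transpose V *v (A *v (V *v u))" unfolding Hdef by (simp add: matrix_vector_mul_assoc matrix_mul_assoc)
    hence "u \<bullet> (H *v u) = u \<bullet> (transpose V *v (A *v (V *v u)))" by simp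
    also have "\<dots> = (V *v u) \<bullet> (A *v (V *v u))" by (rule dot_tr[symmetric])
    finally show ?thesis .
  qed
  obtain BH where BH: "finite BH" "pairwise orthogonal BH"
      "\<forall>b\<in>BH. norm b = 1 \<and> H *v b = (b \<bullet> (H *v b)) *\<^sub>R b" "\<forall>x. x = (\<Sum>b\<in>BH. (x \<bullet> b) *\<^sub>R b)"
    using spectral[OF symH] by (elim exE conjE) (rule that)
  define \<mu> where "\<mu> b = b \<bullet> (H *v b)" for b
  have Heig: "H *v b = \<mu> b *\<^sub>R b" if "b \<in> BH" for b using BH(3) that unfolding \<mu>_def by blast
  have muB: "0 \<le> \<mu> b \<and> \<mu> b \<le> 1" if "b \<in> BH" for b
  proof -
    have "b \<bullet> b = 1" using BH(3) that by (simp add: norm_eq_1)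
    hence "(V *v b) \<bullet> (V *v b) = 1" using VV by simp
    thus ?thesis using qA[of "V *v b"] Hq[of b] unfolding \<mu>_def by simp
  qed
  have h1: "h \<le> 1"
  proof -
    define el where "el = axis la (1::real)"
    have "(A ** V) *v el = (V ** H + h *\<^sub>R outer_last w) *v el" using arnoldi by simp
    hence "A *v (V *v el) = V *v (H *v el) + h *\<^sub>R w"
      by (simp add: matrix_vector_mult_add_rdistrib matrix_vector_mul_assoc scaleR_matrix_vector_assoc[symmetric]
          ol_mv el_def la_def)
    hence "w \<bullet> (A *v (V *v el)) = w \<bullet> (V *v (H *v el)) + h * (w \<bullet> w)"
      by (simp add: inner_add_right)
    moreover have "w \<bullet> w = 1" using nw by (simp add: norm_eq_1)
    ultimately have "h = w \<bullet> (A *v (V *v el))" using wV by simp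
    also have "\<dots> \<le> norm w * norm (A *v (V *v el))" by (rule norm_cauchy_schwarz)
    also have "\<dots> \<le> norm (V *v el)" using nw nA by simp
    also have "\<dots> = 1" using nV by (simp add: el_def)
    finally show ?thesis .
  qed
  define \<alpha> where "\<alpha> (b::real^('m::{finite,linorder})) = b $ fi * b $ la" for b
  define bb where "bb k = (\<Sum>b\<in>BH. \<alpha> b * \<mu> b ^ k)" for k
  have ef: "axis fi (1::real) = (\<Sum>b\<in>BH. (b $ fi) *\<^sub>R b)"
  proof -
    have "axis fi (1::real) = (\<Sum>b\<in>BH. (axis fi 1 \<bullet> b) *\<^sub>R b)" by (rule HOL.spec[OF BH(4)])
    also have "\<dots> = (\<Sum>b\<in>BH. (b $ fi) *\<^sub>R b)" by (simp add: inner_axis')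
    finally show ?thesis .
  qed
  have bbm: "bb k = mpow H k $ la $ fi" for k
  proof -
    have "mpow H k $ la $ fi = (mpow H k *v axis fi 1) $ la" by (simp add: mv_axis)
    also have "mpow H k *v axis fi 1 = (\<Sum>b\<in>BH. (b $ fi * \<mu> b ^ k) *\<^sub>R b)"
      by (subst ef) (simp add: vec.sum matrix_vector_mult_scaleR mpow_eig[OF Heig] cong: sum.cong)
    finally show ?thesis unfolding bb_def \<alpha>_def by (simp add: ac_simps)
  qed
  have bb0: "bb k = 0" if "k < m - 1" for k
    unfolding bbm using tri_zero[OF tri, of k] that unfolding m_def la_def fi_def by simp
  have sq1: "(\<Sum>b\<in>BH. (b $ i)^2) = 1" for i
  proof -
    have "axis i (1::real) \<bullet> axis i 1 = (\<Sum>b\<in>BH. (axis i 1 \<bullet> b) * (axis i 1 \<bullet> b))"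
      by (rule parseval[OF BH(4)])
    thus ?thesis by (simp add: inner_axis' power2_eq_square)
  qed
  have sumalpha: "(\<Sum>b\<in>BH. \<bar>\<alpha> b\<bar>) \<le> 1"
  proof -
    have "(\<Sum>b\<in>BH. \<bar>\<alpha> b\<bar>) \<le> (\<Sum>b\<in>BH. ((b $ fi)^2 + (b $ la)^2) / 2)"
    proof (rule sum_mono)
      fix b :: "real^('m::{finite,linorder})"
      have "0 \<le> (\<bar>b $ fi\<bar> - \<bar>b $ la\<bar>)^2" by (rule zero_le_power2)
      thus "\<bar>\<alpha> b\<bar> \<le> ((b $ fi)^2 + (b $ la)^2) / 2"
        unfolding \<alpha>_def by (simp add: abs_mult power2_eq_square algebra_simps)
    qed
    also have "\<dots> = 1" using sq1[of fi] sq1[of la]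
      by (simp add: sum_divide_distrib[symmetric] sum.distrib)
    finally show ?thesis .
  qed
  define Pd where "Pd d = (\<Sum>b\<in>BH. \<alpha> b * poly (Tc d) (2 * \<mu> b - 1))" for d
  have Pd0: "Pd d = 0" if "\<not> (m - 1 \<le> d)" for d
  proof -
    define Q where "Q = pcompose (Tc d) [:-1, 2:]"
    have Qe: "poly (Tc d) (2 * x - 1) = (\<Sum>i\<le>degree Q. coeff Q i * x^i)" for x
      unfolding poly_altdef[symmetric] Q_def by (simp add: poly_pcompose algebra_simps)
    have dQ: "degree Q \<le> d" unfolding Q_def using Tc_deg[of d] by (simp add: degree_pcompose)
    have "Pd d = (\<Sum>b\<in>BH. \<Sum>i\<le>degree Q. \<alpha> b * (coeff Q i * \<mu> b ^ i))"
      unfolding Pd_def Qe by (simp add: sum_distrib_left)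
    also have "\<dots> = (\<Sum>i\<le>degree Q. coeff Q i * bb i)"
      unfolding bb_def by (subst sum.swap) (simp add: sum_distrib_left ac_simps)
    also have "\<dots> = 0"
    proof (rule sum.neutral, intro ballI)
      fix i assume "i \<in> {..degree Q}"
      hence "i < m - 1" using dQ that by auto
      thus "coeff Q i * bb i = 0" using bb0 by simp
    qed
    finally show ?thesis .
  qed
  have Pd1: "\<bar>Pd d\<bar> \<le> 1" for d
  proof -
    have "\<bar>Pd d\<bar> \<le> (\<Sum>b\<in>BH. \<bar>\<alpha> b * poly (Tc d) (2 * \<mu> b - 1)\<bar>)"
      unfolding Pd_def by (rule sum_abs)
    also have "\<dots> \<le> (\<Sum>b\<in>BH. \<bar>\<alpha> b\<bar>)"
    proof (rule sum_mono)
      fix b assume "b \<in> BH"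
      hence "\<bar>2 * \<mu> b - 1\<bar> \<le> 1" using muB[of b] by (simp add: abs_le_iff)
      hence "\<bar>poly (Tc d) (2 * \<mu> b - 1)\<bar> \<le> 1" by (rule Tc_bound)
      thus "\<bar>\<alpha> b * poly (Tc d) (2 * \<mu> b - 1)\<bar> \<le> \<bar>\<alpha> b\<bar>"
        by (simp add: abs_mult mult_right_le_one_le)
    qed
    also have "\<dots> \<le> 1" by (rule sumalpha)
    finally show ?thesis .
  qed
  have bbd: "\<bar>bb k\<bar> \<le> (1/4^k) * (\<Sum>i\<le>2*k. real ((2*k) choose i) * (if m - 1 \<le> cdist k i then 1 else 0))" for k
  proof -
    define c where "c = (1/4^k::real)"
    have "bb k = (\<Sum>b\<in>BH. \<alpha> b * (c * (\<Sum>i\<le>2*k. real ((2*k) choose i) * poly (Tc (cdist k i)) (2*\<mu> b-1))))"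
      unfolding bb_def
    proof (rule sum.cong[OF refl])
      fix b assume bB: "b \<in> BH"
      have "\<mu> b ^ k = c * (\<Sum>i\<le>2*k. real ((2*k) choose i) * poly (Tc (cdist k i)) (2*\<mu> b-1))"
        unfolding c_def using muB[OF bB] by (intro pow_cheb) auto
      thus "\<alpha> b * \<mu> b ^ k = \<alpha> b * (c * (\<Sum>i\<le>2*k. real ((2*k) choose i) * poly (Tc (cdist k i)) (2*\<mu> b-1)))"
        by simp
    qed
    also have "\<dots> = (\<Sum>b\<in>BH. \<Sum>i\<le>2*k. c * (real ((2*k) choose i) * (\<alpha> b * poly (Tc (cdist k i)) (2*\<mu> b-1))))"
      by (simp add: sum_distrib_left ac_simps)
    also have "\<dots> = (\<Sum>i\<le>2*k. \<Sum>b\<in>BH. c * (real ((2*k) choose i) * (\<alpha> b * poly (Tc (cdist k i)) (2*\<mu> b-1))))"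
      by (rule sum.swap)
    also have "\<dots> = c * (\<Sum>i\<le>2*k. real ((2*k) choose i) * Pd (cdist k i))"
      unfolding Pd_def by (simp add: sum_distrib_left)
    also have "c = 1/4^k" by (simp add: c_def)
    finally have e: "bb k = (1/4^k) * (\<Sum>i\<le>2*k. real ((2*k) choose i) * Pd (cdist k i))" .
    have "\<bar>\<Sum>i\<le>2*k. real ((2*k) choose i) * Pd (cdist k i)\<bar> \<le>
          (\<Sum>i\<le>2*k. \<bar>real ((2*k) choose i) * Pd (cdist k i)\<bar>)" by (rule sum_abs)
    also have "\<dots> \<le> (\<Sum>i\<le>2*k. real ((2*k) choose i) * (if m - 1 \<le> cdist k i then 1 else 0))"
    proof (rule sum_mono)
      fix i
      show "\<bar>real ((2*k) choose i) * Pd (cdist k i)\<bar> \<le> real ((2*k) choose i) * (if m - 1 \<le> cdist k i then 1 else 0)"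
      proof (cases "m - 1 \<le> cdist k i")
        case True
        have "real ((2*k) choose i) * \<bar>Pd (cdist k i)\<bar> \<le> real ((2*k) choose i) * 1"
          using Pd1[of "cdist k i"] by (intro mult_left_mono) auto
        thus ?thesis using True by (simp add: abs_mult)
      next
        case False
        thus ?thesis using Pd0[of "cdist k i"] by simp
      qed
    qed
    finally have "\<bar>\<Sum>i\<le>2*k. real ((2*k) choose i) * Pd (cdist k i)\<bar> \<le>
          (\<Sum>i\<le>2*k. real ((2*k) choose i) * (if m - 1 \<le> cdist k i then 1 else 0))" .
    hence "(1/4^k) * \<bar>\<Sum>i\<le>2*k. real ((2*k) choose i) * Pd (cdist k i)\<bar> \<le>
        (1/4^k) * (\<Sum>i\<le>2*k. real ((2*k) choose i) * (if m - 1 \<le> cdist k i then 1 else 0))"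
      by (intro mult_left_mono) auto
    moreover have "\<bar>bb k\<bar> = (1/4^k) * \<bar>\<Sum>i\<le>2*k. real ((2*k) choose i) * Pd (cdist k i)\<bar>"
      unfolding e by (simp add: abs_mult)
    ultimately show ?thesis by simp
  qed
  have sigM: "mat_sigma ((s^2) *\<^sub>R H) = (\<Sum>b\<in>BH. sig s (\<mu> b) *\<^sub>R outerp b)" for s
  proof -
    have Mexp: "mpow H k = (\<Sum>b\<in>BH. (\<mu> b ^ k) *\<^sub>R outerp b)" for k
    proof (subst matrix_eq, intro allI)
      fix x
      have xe: "x = (\<Sum>b\<in>BH. (x \<bullet> b) *\<^sub>R b)" by (rule HOL.spec[OF BH(4)])
      have "mpow H k *v x = mpow H k *v (\<Sum>b\<in>BH. (x \<bullet> b) *\<^sub>R b)" using xe by (rule arg_cong)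
      also have "\<dots> = (\<Sum>b\<in>BH. (x \<bullet> b) *\<^sub>R (\<mu> b ^ k *\<^sub>R b))"
        by (simp add: vec.sum matrix_vector_mult_scaleR mpow_eig[OF Heig] cong: sum.cong)
      also have "\<dots> = (\<Sum>b\<in>BH. (\<mu> b ^ k *\<^sub>R outerp b) *v x)"
        by (simp add: scaleR_matrix_vector_assoc[symmetric] outerp_mv inner_commute mult.commute)
      also have "\<dots> = (\<Sum>b\<in>BH. (\<mu> b ^ k) *\<^sub>R outerp b) *v x" by (rule sum_mv[OF BH(1), symmetric])
      finally show "mpow H k *v x = (\<Sum>b\<in>BH. (\<mu> b ^ k) *\<^sub>R outerp b) *v x" .
    qed
    have trm: "((-1)^k / fact (2*k+1)) *\<^sub>R mpow ((s^2) *\<^sub>R H) k =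
        (\<Sum>b\<in>BH. (ck k * (s^2 * \<mu> b)^k) *\<^sub>R outerp b)" for k
      by (simp add: mpow_scale Mexp scaleR_sum_right ck_def power_mult_distrib ac_simps)
    have "(\<lambda>k. \<Sum>b\<in>BH. (ck k * (s^2 * \<mu> b)^k) *\<^sub>R outerp b) sums (\<Sum>b\<in>BH. sig s (\<mu> b) *\<^sub>R outerp b)"
      by (intro sums_sum sums_scaleR_left sig_sums) (use muB in auto)
    hence "(\<lambda>k. ((-1)^k / fact (2*k+1)) *\<^sub>R mpow ((s^2) *\<^sub>R H) k) sums (\<Sum>b\<in>BH. sig s (\<mu> b) *\<^sub>R outerp b)"
      by (simp only: trm)
    thus ?thesis unfolding mat_sigma_def by (rule sums_unique[symmetric])
  qed
  define u where "u b = (b $ fi) *\<^sub>R (V *v b)" for b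
  have yexp: "y s = (\<Sum>b\<in>BH. Sf (\<mu> b) s *\<^sub>R u b)" for s
  proof -
    have "(s *\<^sub>R mat_sigma ((s^2) *\<^sub>R H)) *v axis fi 1 = s *\<^sub>R (mat_sigma ((s^2) *\<^sub>R H) *v axis fi 1)"
      by (simp add: scaleR_matrix_vector_assoc)
    also have "mat_sigma ((s^2) *\<^sub>R H) *v axis fi 1 = (\<Sum>b\<in>BH. (sig s (\<mu> b) * b $ fi) *\<^sub>R b)"
      unfolding sigM by (simp add: sum_mv[OF BH(1)] scaleR_matrix_vector_assoc[symmetric] outerp_mv
          inner_axis)
    finally have "(s *\<^sub>R mat_sigma ((s^2) *\<^sub>R H)) *v axis fi 1 = (\<Sum>b\<in>BH. (s * sig s (\<mu> b) * b $ fi) *\<^sub>R b)"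
      by (simp add: scaleR_sum_right mult.assoc)
    hence "y s = V *v (\<Sum>b\<in>BH. (s * sig s (\<mu> b) * b $ fi) *\<^sub>R b)" using ydef unfolding fi_def by simp
    also have "\<dots> = (\<Sum>b\<in>BH. Sf (\<mu> b) s *\<^sub>R u b)"
      by (simp add: vec.sum matrix_vector_mult_scaleR u_def t_sig)
    finally show ?thesis .
  qed
  have yfun: "y = (\<lambda>s. \<Sum>b\<in>BH. Sf (\<mu> b) s *\<^sub>R u b)" using yexp by auto
  have yd: "(y has_vector_derivative (\<Sum>b\<in>BH. Cf (\<mu> b) s *\<^sub>R u b)) (at s)" for s
    unfolding yfun by (intro has_vector_derivative_sum hvd_scale Sf_deriv) (use muB in auto)
  have y'fun: "(\<lambda>s. vector_derivative y (at s)) = (\<lambda>s. \<Sum>b\<in>BH. Cf (\<mu> b) s *\<^sub>R u b)"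
    by (rule ext, rule vector_derivative_at[OF yd])
  have ydd: "vector_derivative (\<lambda>s. vector_derivative y (at s)) (at s) = (\<Sum>b\<in>BH. (- \<mu> b * Sf (\<mu> b) s) *\<^sub>R u b)" for s
    unfolding y'fun
    by (intro vector_derivative_at has_vector_derivative_sum hvd_scale Cf_deriv) (use muB in auto)
  have Au: "A *v u b = \<mu> b *\<^sub>R u b + (h * \<alpha> b) *\<^sub>R w" if "b \<in> BH" for b
  proof -
    have "A *v (V *v b) = (V ** H + h *\<^sub>R outer_last w) *v b"
      using arnoldi by (simp add: matrix_vector_mul_assoc)
    also have "\<dots> = \<mu> b *\<^sub>R (V *v b) + (h * b $ la) *\<^sub>R w"
      by (simp add: matrix_vector_mult_add_rdistrib matrix_vector_mul_assoc[symmetric]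
          scaleR_matrix_vector_assoc[symmetric] ol_mv Heig[OF that] matrix_vector_mult_scaleR la_def)
    finally show ?thesis unfolding u_def \<alpha>_def
      by (simp add: matrix_vector_mult_scaleR algebra_simps)
  qed
  have rform: "r s = - (h * (\<Sum>b\<in>BH. \<alpha> b * Sf (\<mu> b) s)) *\<^sub>R w" for s
  proof -
    have "r s = - (\<Sum>b\<in>BH. Sf (\<mu> b) s *\<^sub>R (A *v u b)) - (\<Sum>b\<in>BH. (- \<mu> b * Sf (\<mu> b) s) *\<^sub>R u b)"
      unfolding rdef ydd yexp by (simp add: vec.sum matrix_vector_mult_scaleR)
    also have "\<dots> = (\<Sum>b\<in>BH. - (Sf (\<mu> b) s *\<^sub>R (A *v u b)) - (- \<mu> b * Sf (\<mu> b) s) *\<^sub>R u b)"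
      by (simp add: sum_negf sum_subtractf)
    also have "\<dots> = (\<Sum>b\<in>BH. (- (h * (\<alpha> b * Sf (\<mu> b) s))) *\<^sub>R w)"
      by (intro sum.cong refl) (simp add: Au algebra_simps)
    also have "\<dots> = - (h * (\<Sum>b\<in>BH. \<alpha> b * Sf (\<mu> b) s)) *\<^sub>R w"
      by (simp add: scaleR_sum_left[symmetric] sum_negf sum_distrib_left)
    finally show ?thesis .
  qed
  show ?thesis
  proof (intro allI impI)
    fix t :: real assume tt: "0 \<le> t \<and> t \<le> 1"
    have ser: "(\<lambda>k. ck k * t^(2*k+1) * bb k) sums (\<Sum>b\<in>BH. \<alpha> b * Sf (\<mu> b) t)"
    proof -
      have "(\<lambda>k. \<Sum>b\<in>BH. \<alpha> b * (ck k * t^(2*k+1) * \<mu> b ^ k)) sums (\<Sum>b\<in>BH. \<alpha> b * Sf (\<mu> b) t)"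
        by (intro sums_sum sums_mult S_sums) (use muB in auto)
      moreover have "(\<lambda>k. \<Sum>b\<in>BH. \<alpha> b * (ck k * t^(2*k+1) * \<mu> b ^ k)) = (\<lambda>k. ck k * t^(2*k+1) * bb k)"
        unfolding bb_def by (simp add: sum_distrib_left ac_simps)
      ultimately show ?thesis by simp
    qed
    have m2': "m \<ge> 2" using m2 unfolding m_def .
    have tb: "\<bar>suminf (\<lambda>k. ck k * t^(2*k+1) * bb k)\<bar> \<le> 8 * ((1/4)^(m-1) / fact (2*m-1)) * t^(2*m-1)"
      using tail_bound[OF m2' conjunct1[OF tt] conjunct2[OF tt] bbd] by (rule conjunct2)
    have "norm (r t) = h * \<bar>\<Sum>b\<in>BH. \<alpha> b * Sf (\<mu> b) t\<bar>"
      unfolding rform using nw hpos by (simp add: abs_mult)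
    also have "\<dots> \<le> 1 * \<bar>\<Sum>b\<in>BH. \<alpha> b * Sf (\<mu> b) t\<bar>"
      using h1 by (intro mult_right_mono) auto
    also have "\<dots> \<le> 8 * ((1/4)^(m-1) / fact (2*m-1)) * t^(2*m-1)"
      using tb sums_unique[OF ser] by simp
    also have "\<dots> = 16 * ((t/2)^(2*m-1) / fact (2*m-1))"
    proof -
      have e: "2*m-1 = 2*(m-1) + 1" using m2' by simp
      have "(t/2)^(2*m-1) = t^(2*m-1) * ((1/4)^(m-1) / 2)"
        unfolding e by (simp add: power_mult power_divide power_add field_simps)
      thus ?thesis by simp
    qed
    finally show "norm (r t) \<le> 16 * ((t/2)^(2*CARD('m)-1) / fact (2*CARD('m)-1))"
      unfolding m_def .
  qed
qed


end
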